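(* Let $\mathcal{R}$ be a tolerance relation on $X=\{1,\dots,n\}$ with chordal graph $G(\mathcal{R})$ and set of maximal cliques $\mathcal{C}$. A nonzero element $(x_{ij})\in E(\mathcal{R})^d_+$ generates an extremal ray of the cone $E(\mathcal{R})^d_+$ if and only if both of the following hold: (1) for every $C\in\mathcal{C}$ the matrix $(x_{ij})_{i,j\in C}$ has rank one or zero; (2) the subgraph of $G(\mathcal{R})$ induced by the vertex set $\{i\in X\mid x_{ii}\neq 0\}$ is connected.
   Context: A tolerance relation on $X=\{1,\dots,n\}$ is a reflexive symmetric relation $\mathcal{R}\subseteq X\times X$; its graph $G(\mathcal{R})$ has vertex set $X$ and an edge between distinct $i,j$ iff $(i,j)\in\mathcal{R}$. A graph is chordal if every cycle of length at least 4 has a chord. $E(\mathcal{R})=\{(x_{ij})\in M_n(\mathbb{C})\mid x_{ij}=0\text{ if }(i,j)\notin\mathcal{R}\}$. The dual $E(\mathcal{R})^d$ is identified with the vector space $E(\mathcal{R})$, with positive cone $E(\mathcal{R})^d_+=\{M\in E(\mathcal{R})\mid \exists N\in M_n(\mathbb{C})\text{ with }N_{ij}=0\text{ for all }(i,j)\in\mathcal{R},\ M+N\text{ positive semidefinite}\}$. A ray is a set $\{\lambda\varphi\mid\lambda\ge0\}$ with $0\neq\varphi$ in the cone; it is extremal if whenever $\varphi_1,\varphi_2$ are in the cone and $\varphi_1+\varphi_2$ lies in the ray, both $\varphi_1,\varphi_2$ lie in the ray. *)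

theory Defs
  imports Complex_Main "Jordan_Normal_Form.DL_Rank_Submatrix"
begin

text \<open>The ground set X = {1,..,n} is represented by the index set {0..<n}
  (JNF matrices are 0-indexed).\<close>

definition tolerance_rel :: "nat \<Rightarrow> (nat \<times> nat) set \<Rightarrow> bool" where
  "tolerance_rel n R \<longleftrightarrow> R \<subseteq> {0..<n} \<times> {0..<n}
     \<and> (\<forall>i<n. (i, i) \<in> R) \<and> (\<forall>i j. (i, j) \<in> R \<longrightarrow> (j, i) \<in> R)"

definition adj :: "(nat \<times> nat) set \<Rightarrow> nat \<Rightarrow> nat \<Rightarrow> bool" where
  "adj R i j \<longleftrightarrow> i \<noteq> j \<and> (i, j) \<in> R"

definition is_cycle :: "nat \<Rightarrow> (nat \<times> nat) set \<Rightarrow> nat list \<Rightarrow> bool" where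
  "is_cycle n R vs \<longleftrightarrow> length vs \<ge> 3 \<and> distinct vs \<and> set vs \<subseteq> {0..<n}
     \<and> (\<forall>i<length vs. adj R (vs ! i) (vs ! ((i + 1) mod length vs)))"

definition has_chord :: "(nat \<times> nat) set \<Rightarrow> nat list \<Rightarrow> bool" where
  "has_chord R vs \<longleftrightarrow> (\<exists>i<length vs. \<exists>j<length vs.
     j \<noteq> (i + 1) mod length vs \<and> i \<noteq> (j + 1) mod length vs \<and> i \<noteq> j
     \<and> adj R (vs ! i) (vs ! j))"

definition chordal :: "nat \<Rightarrow> (nat \<times> nat) set \<Rightarrow> bool" where
  "chordal n R \<longleftrightarrow> (\<forall>vs. is_cycle n R vs \<and> length vs \<ge> 4 \<longrightarrow> has_chord R vs)"

definition is_clique :: "nat \<Rightarrow> (nat \<times> nat) set \<Rightarrow> nat set \<Rightarrow> bool" where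
  "is_clique n R C \<longleftrightarrow> C \<subseteq> {0..<n} \<and> (\<forall>i\<in>C. \<forall>j\<in>C. i \<noteq> j \<longrightarrow> adj R i j)"

definition maximal_cliques :: "nat \<Rightarrow> (nat \<times> nat) set \<Rightarrow> nat set set" where
  "maximal_cliques n R = {C. is_clique n R C \<and> (\<forall>D. is_clique n R D \<and> C \<subseteq> D \<longrightarrow> D = C)}"

definition psd :: "nat \<Rightarrow> complex mat \<Rightarrow> bool" where
  "psd n A \<longleftrightarrow> A \<in> carrier_mat n n \<and>
     (\<forall>v \<in> carrier_vec n. (\<Sum>i<n. \<Sum>j<n. cnj (v $ i) * A $$ (i, j) * v $ j) \<in> \<real>
        \<and> 0 \<le> Re (\<Sum>i<n. \<Sum>j<n. cnj (v $ i) * A $$ (i, j) * v $ j))"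

definition E_space :: "nat \<Rightarrow> (nat \<times> nat) set \<Rightarrow> complex mat set" where
  "E_space n R = {M \<in> carrier_mat n n. \<forall>i<n. \<forall>j<n. (i, j) \<notin> R \<longrightarrow> M $$ (i, j) = 0}"

text \<open>The positive cone E(R)^d_+ (dual identified with E(R)).\<close>
definition dual_cone :: "nat \<Rightarrow> (nat \<times> nat) set \<Rightarrow> complex mat set" where
  "dual_cone n R = {M \<in> E_space n R. \<exists>N \<in> carrier_mat n n.
       (\<forall>i<n. \<forall>j<n. (i, j) \<in> R \<longrightarrow> N $$ (i, j) = 0) \<and> psd n (M + N)}"

definition ray :: "complex mat \<Rightarrow> complex mat set" where
  "ray \<phi> = {complex_of_real c \<cdot>\<^sub>m \<phi> | c. c \<ge> 0}"

definition extremal_ray :: "complex mat set \<Rightarrow> complex mat \<Rightarrow> bool" where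
  "extremal_ray K \<phi> \<longleftrightarrow> \<phi> \<in> K \<and> \<phi> \<noteq> 0\<^sub>m (dim_row \<phi>) (dim_col \<phi>) \<and>
     (\<forall>\<phi>1 \<in> K. \<forall>\<phi>2 \<in> K. \<phi>1 + \<phi>2 \<in> ray \<phi> \<longrightarrow> \<phi>1 \<in> ray \<phi> \<and> \<phi>2 \<in> ray \<phi>)"

definition induced_connected :: "(nat \<times> nat) set \<Rightarrow> nat set \<Rightarrow> bool" where
  "induced_connected R S \<longleftrightarrow>
     (\<forall>u\<in>S. \<forall>v\<in>S. (u, v) \<in> {(i, j). i \<in> S \<and> j \<in> S \<and> adj R i j}\<^sup>*)"

end

theory Submission
  imports Defs
begin


definition F2 :: "complex \<Rightarrow> complex \<Rightarrow> complex \<Rightarrow> complex \<Rightarrow> complex \<Rightarrow> complex \<Rightarrow> complex" where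
  "F2 p q r s x y = cnj x * p * x + cnj x * q * y + cnj y * r * x + cnj y * s * y"

lemma herm_from:
  assumes "\<forall>x y. F2 p q r s x y \<in> \<real>"
  shows "r = cnj q \<and> Im p = 0 \<and> Im s = 0"
proof -
  have 1: "Im (F2 p q r s 1 0) = 0" using assms complex_is_Real_iff by blast
  have 2: "Im (F2 p q r s 0 1) = 0" using assms complex_is_Real_iff by blast
  have 3: "Im (F2 p q r s 1 1) = 0" using assms complex_is_Real_iff by blast
  have 4: "Im (F2 p q r s 1 \<i>) = 0" using assms complex_is_Real_iff by blast
  show ?thesis using 1 2 3 4 by (auto simp: F2_def complex_eq_iff algebra_simps)
qed

lemma expand2:
  fixes P S e :: real
  shows "Re (F2 (of_real P) q (cnj q) (of_real S) (x0 + of_real e * (of_real P * x0 + q * y0)) (y0 + of_real e * (cnj q * x0 + of_real S * y0)))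
    = Re (F2 (of_real P) q (cnj q) (of_real S) x0 y0) + 2 * e * ((cmod (of_real P * x0 + q * y0))\<^sup>2 + (cmod (cnj q * x0 + of_real S * y0))\<^sup>2)
      + e\<^sup>2 * Re (F2 (of_real P) q (cnj q) (of_real S) (of_real P * x0 + q * y0) (cnj q * x0 + of_real S * y0))"
  unfolding F2_def cmod_power2 by (simp add: algebra_simps power2_eq_square)

lemma quad_zero:
  fixes K L :: real
  assumes "K \<ge> 0" "L \<ge> 0" "\<forall>e. 0 \<le> 2*e*K + e\<^sup>2 * L"
  shows "K = 0"
proof (rule ccontr)
  assume "K \<noteq> 0" hence K: "K > 0" using assms by auto
  have h: "L + 1 > 0" using assms by auto
  define e where "e = -K/(L+1)"
  have en: "e < 0" unfolding e_def using K h by (simp add: divide_neg_pos)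
  have "L/(L+1) \<le> 1" using h by simp
  hence "K * (L/(L+1)) \<le> K" using K by (intro mult_left_le) auto
  hence "e*L \<ge> -K" unfolding e_def by (simp add: algebra_simps)
  hence "2*K + e*L > 0" using K by linarith
  hence "e * (2*K + e*L) < 0" using en by (simp add: mult_neg_pos)
  moreover have "0 \<le> 2*e*K + e\<^sup>2 * L" using assms by blast
  ultimately show False by (simp add: algebra_simps power2_eq_square)
qed

lemma kernel2:
  assumes "Im p = 0" "Im s = 0" "r = cnj q" "\<forall>x y. 0 \<le> Re (F2 p q r s x y)"
    and "Re (F2 p q r s x0 y0) = 0"
  shows "p*x0 + q*y0 = 0 \<and> r*x0 + s*y0 = 0"
proof -
  define P where "P = Re p" define S where "S = Re s"
  have p: "p = of_real P" using assms(1) unfolding P_def by (simp add: complex_eq_iff)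
  have s: "s = of_real S" using assms(2) unfolding S_def by (simp add: complex_eq_iff)
  define K where "K = (cmod (of_real P * x0 + q * y0))\<^sup>2 + (cmod (cnj q * x0 + of_real S * y0))\<^sup>2"
  define L where "L = Re (F2 (of_real P) q (cnj q) (of_real S) (of_real P * x0 + q * y0) (cnj q * x0 + of_real S * y0))"
  have "\<forall>e. 0 \<le> 2*e*K + e\<^sup>2 * L"
  proof
    fix e :: real
    have "0 \<le> Re (F2 (of_real P) q (cnj q) (of_real S) (x0 + of_real e * (of_real P * x0 + q * y0)) (y0 + of_real e * (cnj q * x0 + of_real S * y0)))"
      using assms(4) unfolding p s assms(3) by blast
    then show "0 \<le> 2*e*K + e\<^sup>2 * L" unfolding expand2 K_def L_def using assms(5) unfolding p s assms(3)
      by simp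
  qed
  moreover have "L \<ge> 0" unfolding L_def using assms(4) unfolding p s assms(3) by blast
  ultimately have "K = 0" using quad_zero[of K L] unfolding K_def by auto
  then show ?thesis unfolding K_def p s assms(3)
    by (metis add_nonneg_eq_0_iff norm_eq_zero zero_le_power2 zero_power2 power_eq_0_iff)
qed

definition sf :: "nat \<Rightarrow> complex mat \<Rightarrow> (nat \<Rightarrow> complex) \<Rightarrow> (nat \<Rightarrow> complex) \<Rightarrow> complex" where
  "sf n A f g = (\<Sum>i<n. \<Sum>j<n. cnj (f i) * A $$ (i, j) * g j)"

lemma psd_iff: "psd n A \<longleftrightarrow> A \<in> carrier_mat n n \<and> (\<forall>f. sf n A f f \<in> \<real> \<and> 0 \<le> Re (sf n A f f))"
proof
  assume a: "psd n A"
  show "A \<in> carrier_mat n n \<and> (\<forall>f. sf n A f f \<in> \<real> \<and> 0 \<le> Re (sf n A f f))"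
  proof (intro conjI allI)
    show "A \<in> carrier_mat n n" using a psd_def by blast
    fix f
    have e: "sf n A f f = (\<Sum>i<n. \<Sum>j<n. cnj (vec n f $ i) * A $$ (i, j) * vec n f $ j)"
      unfolding sf_def by (intro sum.cong refl) auto
    have "vec n f \<in> carrier_vec n" by simp
    then show "sf n A f f \<in> \<real>" "0 \<le> Re (sf n A f f)" unfolding e using a psd_def by blast+
  qed
next
  assume "A \<in> carrier_mat n n \<and> (\<forall>f. sf n A f f \<in> \<real> \<and> 0 \<le> Re (sf n A f f))"
  then show "psd n A" unfolding psd_def
  proof (intro conjI ballI; elim conjE)
    fix v :: "complex vec"
    assume h: "\<forall>f. sf n A f f \<in> \<real> \<and> 0 \<le> Re (sf n A f f)"
    have e: "(\<Sum>i<n. \<Sum>j<n. cnj (v $ i) * A $$ (i, j) * v $ j) = sf n A (\<lambda>i. v $ i) (\<lambda>i. v $ i)"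
      unfolding sf_def by simp
    show "(\<Sum>i<n. \<Sum>j<n. cnj (v $ i) * A $$ (i, j) * v $ j) \<in> \<real>"
         "0 \<le> Re (\<Sum>i<n. \<Sum>j<n. cnj (v $ i) * A $$ (i, j) * v $ j)" unfolding e using h by auto
  qed
qed

lemma sum_supp:
  fixes h :: "nat \<Rightarrow> complex"
  assumes "S \<subseteq> {..<n}" "\<And>i. i \<notin> S \<Longrightarrow> h i = 0"
  shows "(\<Sum>i<n. h i) = (\<Sum>i\<in>S. h i)"
  using assms by (intro sum.mono_neutral_right) auto

lemma sf_supp:
  assumes "S \<subseteq> {..<n}" "\<And>i. i \<notin> S \<Longrightarrow> f i = 0" "\<And>i. i \<notin> S \<Longrightarrow> g i = 0"
  shows "sf n A f g = (\<Sum>i\<in>S. \<Sum>j\<in>S. cnj (f i) * A $$ (i, j) * g j)"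
proof -
  have "sf n A f g = (\<Sum>i<n. \<Sum>j\<in>S. cnj (f i) * A $$ (i, j) * g j)"
    unfolding sf_def by (intro sum.cong refl sum_supp[OF assms(1)]) (use assms(3) in auto)
  also have "\<dots> = (\<Sum>i\<in>S. \<Sum>j\<in>S. cnj (f i) * A $$ (i, j) * g j)"
    by (intro sum_supp[OF assms(1)]) (use assms(2) in auto)
  finally show ?thesis .
qed

lemma sf_two:
  assumes "i < n" "j < n" "i \<noteq> j"
  shows "sf n A (\<lambda>k. if k = i then x else if k = j then y else 0) (\<lambda>k. if k = i then x else if k = j then y else 0)
     = F2 (A $$ (i,i)) (A $$ (i,j)) (A $$ (j,i)) (A $$ (j,j)) x y"
  using assms by (subst sf_supp[where S="{i,j}"]) (auto simp: F2_def)

lemma sf_one: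
  assumes "i < n"
  shows "sf n A (\<lambda>k. if k = i then 1 else 0) (\<lambda>k. if k = i then 1 else 0) = A $$ (i,i)"
  using assms by (subst sf_supp[where S="{i}"]) auto

lemma psd_two:
  assumes "psd n A" "i < n" "j < n" "i \<noteq> j"
  shows "\<forall>x y. F2 (A $$ (i,i)) (A $$ (i,j)) (A $$ (j,i)) (A $$ (j,j)) x y \<in> \<real>
       \<and> 0 \<le> Re (F2 (A $$ (i,i)) (A $$ (i,j)) (A $$ (j,i)) (A $$ (j,j)) x y)"
proof (intro allI)
  fix x y
  have "sf n A (\<lambda>k. if k = i then x else if k = j then y else 0) (\<lambda>k. if k = i then x else if k = j then y else 0) \<in> \<real>
    \<and> 0 \<le> Re (sf n A (\<lambda>k. if k = i then x else if k = j then y else 0) (\<lambda>k. if k = i then x else if k = j then y else 0))"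
    using assms(1) unfolding psd_iff by blast
  then show "F2 (A $$ (i,i)) (A $$ (i,j)) (A $$ (j,i)) (A $$ (j,j)) x y \<in> \<real>
       \<and> 0 \<le> Re (F2 (A $$ (i,i)) (A $$ (i,j)) (A $$ (j,i)) (A $$ (j,j)) x y)"
    unfolding sf_two[OF assms(2-4)] .
qed

lemma psd_diag:
  assumes "psd n A" "i < n"
  shows "Im (A $$ (i,i)) = 0 \<and> 0 \<le> Re (A $$ (i,i))"
proof -
  have "sf n A (\<lambda>k. if k = i then 1 else 0) (\<lambda>k. if k = i then 1 else 0) \<in> \<real>
    \<and> 0 \<le> Re (sf n A (\<lambda>k. if k = i then 1 else 0) (\<lambda>k. if k = i then 1 else 0))"
    using assms(1) unfolding psd_iff by blast
  then show ?thesis unfolding sf_one[OF assms(2)] complex_is_Real_iff .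
qed

lemma psd_herm:
  assumes "psd n A" "i < n" "j < n"
  shows "A $$ (j,i) = cnj (A $$ (i,j))"
proof (cases "i = j")
  case True then show ?thesis using psd_diag[OF assms(1,2)] by (simp add: complex_eq_iff)
next
  case False then show ?thesis using herm_from psd_two[OF assms False] by blast
qed



lemma cone_D:
  assumes "M \<in> dual_cone n R"
  obtains N where "M \<in> carrier_mat n n" "N \<in> carrier_mat n n" "\<forall>i<n. \<forall>j<n. (i,j)\<notin>R \<longrightarrow> M$$(i,j)=0"
    "\<forall>i<n. \<forall>j<n. (i,j)\<in>R \<longrightarrow> N$$(i,j)=0" "psd n (M+N)"
  using assms unfolding dual_cone_def E_space_def by blast

lemma tolD:
  assumes "tolerance_rel n R"
  shows "\<And>i. i < n \<Longrightarrow> (i,i) \<in> R" "\<And>i j. (i,j) \<in> R \<Longrightarrow> (j,i) \<in> R" "\<And>i j. (i,j) \<in> R \<Longrightarrow> i < n \<and> j < n"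
  using assms unfolding tolerance_rel_def by auto

lemma cone_two:
  assumes tol: "tolerance_rel n R" and M: "M \<in> dual_cone n R" and ij: "i<n" "j<n" "i\<noteq>j" "(i,j)\<in>R"
  shows "\<forall>x y. F2 (M$$(i,i)) (M$$(i,j)) (M$$(j,i)) (M$$(j,j)) x y \<in> \<real>
     \<and> 0 \<le> Re (F2 (M$$(i,i)) (M$$(i,j)) (M$$(j,i)) (M$$(j,j)) x y)"
proof -
  obtain N where N: "M \<in> carrier_mat n n" "N \<in> carrier_mat n n" "\<forall>i<n. \<forall>j<n. (i,j)\<in>R \<longrightarrow> N$$(i,j)=0"
     "psd n (M+N)" by (rule cone_D[OF M])
  have e: "(M+N)$$(a,b) = M$$(a,b)" if "(a,b)\<in>R" for a b
    using that N tolD(3)[OF tol that] by auto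
  have R: "(i,i)\<in>R" "(j,j)\<in>R" "(j,i)\<in>R" using tolD[OF tol] ij by auto
  show ?thesis using psd_two[OF N(4) ij(1-3)] unfolding e[OF R(1)] e[OF R(2)] e[OF R(3)] e[OF ij(4)] .
qed

lemma cone_diag:
  assumes tol: "tolerance_rel n R" and M: "M \<in> dual_cone n R" and i: "i<n"
  shows "Im (M$$(i,i)) = 0 \<and> 0 \<le> Re (M$$(i,i))"
proof -
  obtain N where N: "M \<in> carrier_mat n n" "N \<in> carrier_mat n n" "\<forall>i<n. \<forall>j<n. (i,j)\<in>R \<longrightarrow> N$$(i,j)=0"
     "psd n (M+N)" by (rule cone_D[OF M])
  have "(M+N)$$(i,i) = M$$(i,i)" using N i tolD(1)[OF tol i] by auto
  then show ?thesis using psd_diag[OF N(4) i] by simp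
qed

lemma cone_herm:
  assumes tol: "tolerance_rel n R" and M: "M \<in> dual_cone n R" and ij: "i<n" "j<n"
  shows "M$$(j,i) = cnj (M$$(i,j))"
proof -
  obtain N where N: "M \<in> carrier_mat n n" "\<forall>i<n. \<forall>j<n. (i,j)\<notin>R \<longrightarrow> M$$(i,j)=0"
     by (rule cone_D[OF M])
  show ?thesis
  proof (cases "i = j")
    case True then show ?thesis using cone_diag[OF tol M ij(1)] by (simp add: complex_eq_iff)
  next
    case False
    show ?thesis
    proof (cases "(i,j) \<in> R")
      case True then show ?thesis using herm_from cone_two[OF tol M ij False] by blast
    next
      case nR: False
      then have "(j,i) \<notin> R" using tolD(2)[OF tol] by blast
      then show ?thesis using nR N ij by auto
    qed
  qed
qed

lemma cone_zero:
  assumes tol: "tolerance_rel n R" and M: "M \<in> dual_cone n R" and ij: "i<n" "j<n" and z: "M$$(i,i) = 0"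
  shows "M$$(i,j) = 0 \<and> M$$(j,i) = 0"
proof -
  obtain N where N: "M \<in> carrier_mat n n" "\<forall>i<n. \<forall>j<n. (i,j)\<notin>R \<longrightarrow> M$$(i,j)=0"
     by (rule cone_D[OF M])
  show ?thesis
  proof (cases "i = j")
    case True then show ?thesis using z by simp
  next
    case False
    show ?thesis
    proof (cases "(i,j) \<in> R")
      case True
      note h = cone_two[OF tol M ij False True]
      have hf: "M$$(j,i) = cnj (M$$(i,j)) \<and> Im (M$$(i,i)) = 0 \<and> Im (M$$(j,j)) = 0"
        using herm_from h by blast
      have "Re (F2 (M$$(i,i)) (M$$(i,j)) (M$$(j,i)) (M$$(j,j)) 1 0) = 0" using z by (simp add: F2_def)
      then have "M$$(j,i) * 1 + M$$(j,j) * 0 = 0"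
        using kernel2[of "M$$(i,i)" "M$$(j,j)" "M$$(j,i)" "M$$(i,j)" 1 0] hf h by blast
      then have "M$$(j,i) = 0" by simp
      then show ?thesis using hf by (metis complex_cnj_cnj complex_cnj_zero)
    next
      case nR: False
      then have "(j,i) \<notin> R" using tolD(2)[OF tol] by blast
      then show ?thesis using nR N ij by auto
    qed
  qed
qed

lemma det2_nz:
  fixes B :: "complex mat"
  assumes B: "B \<in> carrier_mat 2 2" and nz: "B$$(0,0) * B$$(1,1) - B$$(0,1) * B$$(1,0) \<noteq> 0"
  shows "det B \<noteq> 0"
proof
  assume "det B = 0"
  then obtain v where v: "v \<in> carrier_vec 2" "v \<noteq> 0\<^sub>v 2" "B *\<^sub>v v = 0\<^sub>v 2"
    using det_0_iff_vec_prod_zero[OF B] by blast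
  have r: "(B *\<^sub>v v) $ k = B$$(k,0) * v$0 + B$$(k,1) * v$1" if "k < 2" for k
    using B v(1) that by (simp add: scalar_prod_def numeral_2_eq_2 row_def)
  have e0: "B$$(0,0) * v$0 + B$$(0,1) * v$1 = 0" using r[of 0] v(3) by simp
  have e1: "B$$(1,0) * v$0 + B$$(1,1) * v$1 = 0" using r[of 1] v(3) by simp
  have "(B$$(0,0) * B$$(1,1) - B$$(0,1) * B$$(1,0)) * v$0 = B$$(1,1) * (B$$(0,0) * v$0 + B$$(0,1) * v$1) - B$$(0,1) * (B$$(1,0) * v$0 + B$$(1,1) * v$1)"
    by (simp add: algebra_simps)
  hence "(B$$(0,0) * B$$(1,1) - B$$(0,1) * B$$(1,0)) * v$0 = 0" using e0 e1 by simp
  hence a: "v$0 = 0" using nz by simp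
  have "(B$$(0,0) * B$$(1,1) - B$$(0,1) * B$$(1,0)) * v$1 = B$$(0,0) * (B$$(1,0) * v$0 + B$$(1,1) * v$1) - B$$(1,0) * (B$$(0,0) * v$0 + B$$(0,1) * v$1)"
    by (simp add: algebra_simps)
  hence "(B$$(0,0) * B$$(1,1) - B$$(0,1) * B$$(1,0)) * v$1 = 0" using e0 e1 by simp
  hence b: "v$1 = 0" using nz by simp
  have "v = 0\<^sub>v 2"
  proof (rule eq_vecI)
    show "dim_vec v = dim_vec (0\<^sub>v 2)" using v(1) by simp
    fix k assume "k < dim_vec (0\<^sub>v 2)" then have "k = 0 \<or> k = 1" by auto
    then show "v $ k = 0\<^sub>v 2 $ k" using a b by auto
  qed
  then show False using v(2) by simp
qed



lemma minor_lt:
  fixes M :: "complex mat"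
  assumes M: "M \<in> carrier_mat n n" and C: "C \<subseteq> {0..<n}" and rk: "vec_space.rank (card C) (submatrix M C C) \<le> 1"
    and ij: "i \<in> C" "j \<in> C" "i < j"
  shows "M$$(i,i) * M$$(j,j) = M$$(i,j) * M$$(j,i)"
proof (rule ccontr)
  assume nz: "M$$(i,i) * M$$(j,j) \<noteq> M$$(i,j) * M$$(j,i)"
  define m where "m = card C"
  define A where "A = submatrix M C C"
  have finC: "finite C" by (rule finite_subset[OF C]) simp
  have CC: "{k. k < dim_row M \<and> k \<in> C} = C" "{k. k < dim_col M \<and> k \<in> C} = C" using C M by fastforce+
  have A: "A \<in> carrier_mat m m" unfolding A_def m_def
    by (rule carrier_matI) (simp_all only: dim_submatrix CC)
  define a where "a = card {x\<in>C. x < i}"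
  define b where "b = card {x\<in>C. x < j}"
  have pa: "pick C a = i" unfolding a_def using ij pick_card_in_set by blast
  have pb: "pick C b = j" unfolding b_def using ij pick_card_in_set by blast
  have ab: "a < b" unfolding a_def b_def
  proof (rule psubset_card_mono)
    show "finite {x \<in> C. x < j}" using finC by simp
    have "i \<in> {x \<in> C. x < j}" "i \<notin> {x \<in> C. x < i}" using ij by auto
    moreover have "{x \<in> C. x < i} \<subseteq> {x \<in> C. x < j}" using ij by auto
    ultimately show "{x \<in> C. x < i} \<subset> {x \<in> C. x < j}" by blast
  qed
  have bm: "b < m" unfolding b_def m_def
  proof (rule psubset_card_mono)
    show "finite C" using finC by simp
    have "j \<in> C" "j \<notin> {x \<in> C. x < j}" using ij by auto
    then show "{x \<in> C. x < j} \<subset> C" by blast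
  qed
  have Aent: "A$$(x,y) = M$$(pick C x, pick C y)" if "x<m" "y<m" for x y
  proof -
    have "x < card {k. k < dim_row M \<and> k \<in> C}" "y < card {k. k < dim_col M \<and> k \<in> C}"
      using that unfolding CC m_def by auto
    then show ?thesis unfolding A_def submatrix_def by (subst index_mat(1)) auto
  qed
  define B where "B = submatrix A {a,b} {a,b}"
  have ABc: "{k. k < dim_row A \<and> k \<in> {a,b}} = {a,b}" "{k. k < dim_col A \<and> k \<in> {a,b}} = {a,b}"
    using ab bm A by auto
  have c2: "card {a,b} = 2" using ab by simp
  have B: "B \<in> carrier_mat 2 2" unfolding B_def
    by (rule carrier_matI) (simp_all only: dim_submatrix ABc c2)
  have e0: "{x\<in>{a,b}. x < a} = {}" using ab by auto
  have e1: "{x\<in>{a,b}. x < b} = {a}" using ab by auto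
  have h0: "pick {a,b} (card {x\<in>{a,b}. x<a}) = a" by (rule pick_card_in_set) simp
  have h1: "pick {a,b} (card {x\<in>{a,b}. x<b}) = b" by (rule pick_card_in_set) simp
  have c1: "card {a} = 1" by simp
  have p0: "pick {a,b} 0 = a" using h0 unfolding e0 card.empty .
  have p1: "pick {a,b} 1 = b" using h1 unfolding e1 c1 .
  have Bent: "B$$(x,y) = A$$(pick {a,b} x, pick {a,b} y)" if "x<2" "y<2" for x y
  proof -
    have "x < card {k. k < dim_row A \<and> k \<in> {a,b}}" "y < card {k. k < dim_col A \<and> k \<in> {a,b}}"
      using that unfolding ABc c2 by auto
    then show ?thesis unfolding B_def submatrix_def by (subst index_mat(1)) auto
  qed
  have am: "a < m" using ab bm by simp
  have "B$$(0,0) = M$$(i,i)" using Bent[of 0 0] p0 Aent[OF am am] pa by simp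
  moreover have "B$$(1,1) = M$$(j,j)" using Bent[of 1 1] p1 Aent[OF bm bm] pb by simp
  moreover have "B$$(0,1) = M$$(i,j)" using Bent[of 0 1] p0 p1 Aent[OF am bm] pa pb by simp
  moreover have "B$$(1,0) = M$$(j,i)" using Bent[of 1 0] p0 p1 Aent[OF bm am] pa pb by simp
  ultimately have "det B \<noteq> 0" using det2_nz[OF B] nz by simp
  then have "card {k. k < m \<and> k \<in> {a,b}} \<le> vec_space.rank m A"
    using vec_space.rank_gt_minor[OF A] unfolding B_def by blast
  moreover have "{k. k < m \<and> k \<in> {a,b}} = {a,b}" using ab bm by auto
  ultimately show False using rk c2 unfolding A_def m_def by simp
qed

lemma minor:
  fixes M :: "complex mat"
  assumes M: "M \<in> carrier_mat n n" and C: "C \<subseteq> {0..<n}" and rk: "vec_space.rank (card C) (submatrix M C C) \<le> 1"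
    and ij: "i \<in> C" "j \<in> C"
  shows "M$$(i,i) * M$$(j,j) = M$$(i,j) * M$$(j,i)"
proof -
  consider "i < j" | "i = j" | "j < i" by linarith
  then show ?thesis
  proof cases
    case 1 then show ?thesis using minor_lt[OF M C rk ij] by simp
  next
    case 2 then show ?thesis by simp
  next
    case 3 then show ?thesis using minor_lt[OF M C rk ij(2,1)] by (simp add: mult.commute)
  qed
qed

lemma max_clique_ex:
  assumes "is_clique n R D"
  shows "\<exists>C\<in>maximal_cliques n R. D \<subseteq> C"
proof -
  let ?A = "{C. is_clique n R C \<and> D \<subseteq> C}"
  have fin: "finite ?A"
    by (rule finite_subset[of _ "Pow {0..<n}"]) (auto simp: is_clique_def)
  have ne: "?A \<noteq> {}" using assms by blast
  obtain m where m: "m \<in> ?A" "\<forall>b\<in>?A. m \<subseteq> b \<longrightarrow> m = b"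
    using finite_has_maximal[OF fin ne] by blast
  have "m \<in> maximal_cliques n R" unfolding maximal_cliques_def using m by auto
  then show ?thesis using m by blast
qed

lemma edge_clique:
  assumes tol: "tolerance_rel n R" and "adj R i j"
  shows "\<exists>C\<in>maximal_cliques n R. i \<in> C \<and> j \<in> C"
proof -
  have a: "i \<noteq> j" "(i,j) \<in> R" using assms(2) unfolding adj_def by auto
  have b: "(j,i) \<in> R" "i < n" "j < n" using tolD(2,3)[OF tol a(2)] by auto
  have "is_clique n R {i,j}" unfolding is_clique_def adj_def
    using a b by (simp add: insert_commute)
  then obtain C where "C \<in> maximal_cliques n R" "{i,j} \<subseteq> C" using max_clique_ex by blast
  then show ?thesis by blast
qed

lemma clique_sub: "C \<in> maximal_cliques n R \<Longrightarrow> C \<subseteq> {0..<n}"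
  unfolding maximal_cliques_def is_clique_def by blast

lemma F2_add: "F2 p1 q1 r1 s1 x y + F2 p2 q2 r2 s2 x y = F2 (p1+p2) (q1+q2) (r1+r2) (s1+s2) x y"
  by (simp add: F2_def algebra_simps)

lemma F2_smult: "F2 (c*p) (c*q) (c*r) (c*s) x y = c * F2 p q r s x y"
  by (simp add: F2_def algebra_simps)



lemma cone_carrier: "M \<in> dual_cone n R \<Longrightarrow> M \<in> carrier_mat n n"
  by (auto simp: dual_cone_def E_space_def)

lemma cone_offR: "M \<in> dual_cone n R \<Longrightarrow> i<n \<Longrightarrow> j<n \<Longrightarrow> (i,j)\<notin>R \<Longrightarrow> M$$(i,j) = 0"
  by (auto simp: dual_cone_def E_space_def)

lemma exists_diag:
  assumes tol: "tolerance_rel n R" and M: "M \<in> dual_cone n R" and nz: "M \<noteq> 0\<^sub>m n n"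
  shows "\<exists>i<n. M$$(i,i) \<noteq> 0"
proof (rule ccontr)
  assume "\<not> (\<exists>i<n. M$$(i,i) \<noteq> 0)"
  then have z: "\<And>i. i < n \<Longrightarrow> M$$(i,i) = 0" by blast
  have Mc: "M \<in> carrier_mat n n" by (rule cone_carrier[OF M])
  have "M = 0\<^sub>m n n"
  proof (rule eq_matI)
    fix i j assume "i < dim_row (0\<^sub>m n n :: complex mat)" "j < dim_col (0\<^sub>m n n :: complex mat)"
    then have ij: "i < n" "j < n" by auto
    then show "M$$(i,j) = 0\<^sub>m n n $$ (i,j)" using cone_zero[OF tol M ij z[OF ij(1)]] by simp
  qed (use Mc in auto)
  then show False using nz by simp
qed

lemma edge_prop:
  assumes tol: "tolerance_rel n R" and M: "M \<in> dual_cone n R" and p1: "\<phi>1 \<in> dual_cone n R" and p2: "\<phi>2 \<in> dual_cone n R"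
    and sum: "\<And>i j. i<n \<Longrightarrow> j<n \<Longrightarrow> \<phi>1$$(i,j) + \<phi>2$$(i,j) = c * M$$(i,j)"
    and ij: "i<n" "j<n" "i\<noteq>j" "(i,j)\<in>R" and anz: "M$$(i,i) \<noteq> 0" and dnz: "M$$(j,j) \<noteq> 0"
    and mn: "M$$(i,i) * M$$(j,j) = M$$(i,j) * M$$(j,i)"
  shows "\<phi>1$$(i,j) = (\<phi>1$$(i,i) / M$$(i,i)) * M$$(i,j) \<and> \<phi>1$$(j,j) / M$$(j,j) = \<phi>1$$(i,i) / M$$(i,i)"
proof -
  define a where "a = M$$(i,i)" define b where "b = M$$(i,j)"
  define b' where "b' = M$$(j,i)" define d where "d = M$$(j,j)"
  define a1 where "a1 = \<phi>1$$(i,i)" define b1 where "b1 = \<phi>1$$(i,j)"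
  define b1' where "b1' = \<phi>1$$(j,i)" define d1 where "d1 = \<phi>1$$(j,j)"
  define a2 where "a2 = \<phi>2$$(i,i)" define b2 where "b2 = \<phi>2$$(i,j)"
  define b2' where "b2' = \<phi>2$$(j,i)" define d2 where "d2 = \<phi>2$$(j,j)"
  have mn': "a*d = b*b'" using mn unfolding a_def b_def b'_def d_def .
  have "F2 a b b' d b (-a) = cnj a * (a*d - b*b')" unfolding F2_def by (simp add: algebra_simps)
  then have F0: "F2 a b b' d b (-a) = 0" using mn' by simp
  have "F2 a1 b1 b1' d1 b (-a) + F2 a2 b2 b2' d2 b (-a) = F2 (c*a) (c*b) (c*b') (c*d) b (-a)"
    unfolding F2_add a1_def a2_def b1_def b2_def b1'_def b2'_def d1_def d2_def a_def b_def b'_def d_def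
    using sum ij by simp
  also have "\<dots> = 0" unfolding F2_smult F0 by simp
  finally have Fs: "F2 a1 b1 b1' d1 b (-a) + F2 a2 b2 b2' d2 b (-a) = 0" .
  note h1 = cone_two[OF tol p1 ij, folded a1_def b1_def b1'_def d1_def]
  note h2 = cone_two[OF tol p2 ij, folded a2_def b2_def b2'_def d2_def]
  note hM = cone_two[OF tol M ij, folded a_def b_def b'_def d_def]
  have r1: "0 \<le> Re (F2 a1 b1 b1' d1 b (-a))" using h1 by blast
  have r2: "0 \<le> Re (F2 a2 b2 b2' d2 b (-a))" using h2 by blast
  have "Re (F2 a1 b1 b1' d1 b (-a)) + Re (F2 a2 b2 b2' d2 b (-a)) = 0" using arg_cong[OF Fs, of Re] by simp
  then have r0: "Re (F2 a1 b1 b1' d1 b (-a)) = 0" using r1 r2 by linarith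
  have herm1: "b1' = cnj b1 \<and> Im a1 = 0 \<and> Im d1 = 0" using herm_from h1 by blast
  have hermM: "b' = cnj b \<and> Im a = 0 \<and> Im d = 0" using herm_from hM by blast
  have k: "a1*b + b1*(-a) = 0 \<and> b1'*b + d1*(-a) = 0"
    using kernel2[of a1 d1 b1' b1 b "-a"] herm1 h1 r0 by blast
  have a0: "a \<noteq> 0" "d \<noteq> 0" using anz dnz a_def d_def by auto
  have ca: "cnj a = a" using hermM by (simp add: complex_eq_iff)
  have ca1: "cnj a1 = a1" using herm1 by (simp add: complex_eq_iff)
  have b1e: "b1 = a1 * b / a" using k a0 by (simp add: field_simps)
  have b1'e: "b1' = a1 * b' / a" using herm1 hermM b1e ca ca1 by simp
  have "d1 * a = b1' * b" using k by (simp add: algebra_simps)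
  also have "\<dots> = a1 * (b * b') / a" unfolding b1'e by (simp add: algebra_simps)
  also have "\<dots> = a1 * d" using mn' a0 by (simp add: field_simps)
  finally have "d1 * a = a1 * d" .
  then have "d1 / d = a1 / a" using a0 by (simp add: field_simps)
  then show ?thesis unfolding a_def b_def d_def a1_def b1_def d1_def using b1e[unfolded a_def b_def a1_def b1_def]
    by simp
qed



lemma ray_if:
  assumes tol: "tolerance_rel n R" and M: "M \<in> dual_cone n R" and nz: "M \<noteq> 0\<^sub>m n n"
    and rk: "\<forall>C \<in> maximal_cliques n R. vec_space.rank (card C) (submatrix M C C) \<le> 1"
    and conn: "induced_connected R {i. i < n \<and> M $$ (i, i) \<noteq> 0}"
    and p1: "\<phi>1 \<in> dual_cone n R" and p2: "\<phi>2 \<in> dual_cone n R" and s: "\<phi>1 + \<phi>2 \<in> ray M"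
  shows "\<phi>1 \<in> ray M"
proof -
  obtain c where c: "c \<ge> 0" "\<phi>1 + \<phi>2 = complex_of_real c \<cdot>\<^sub>m M" using s unfolding ray_def by blast
  have Mc: "M \<in> carrier_mat n n" by (rule cone_carrier[OF M])
  have p1c: "\<phi>1 \<in> carrier_mat n n" by (rule cone_carrier[OF p1])
  have p2c: "\<phi>2 \<in> carrier_mat n n" by (rule cone_carrier[OF p2])
  have sum: "\<phi>1$$(i,j) + \<phi>2$$(i,j) = complex_of_real c * M$$(i,j)" if "i<n" "j<n" for i j
  proof -
    have "(\<phi>1 + \<phi>2)$$(i,j) = (complex_of_real c \<cdot>\<^sub>m M)$$(i,j)" using c by simp
    then show ?thesis using that Mc p1c p2c by simp
  qed
  have zero1: "\<phi>1$$(i,i) = 0" if i: "i<n" and z: "complex_of_real c * M$$(i,i) = 0" for i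
  proof -
    have d1: "Im (\<phi>1$$(i,i)) = 0 \<and> 0 \<le> Re (\<phi>1$$(i,i))" by (rule cone_diag[OF tol p1 i])
    have d2: "Im (\<phi>2$$(i,i)) = 0 \<and> 0 \<le> Re (\<phi>2$$(i,i))" by (rule cone_diag[OF tol p2 i])
    have "\<phi>1$$(i,i) + \<phi>2$$(i,i) = 0" using sum[OF i i] z by simp
    then have "Re (\<phi>1$$(i,i)) + Re (\<phi>2$$(i,i)) = 0" by (metis plus_complex.simps(1) zero_complex.simps(1))
    then have "Re (\<phi>1$$(i,i)) = 0" using d1 d2 by linarith
    then show ?thesis using d1 by (simp add: complex_eq_iff)
  qed
  show ?thesis
  proof (cases "c = 0")
    case True
    have "\<phi>1 = complex_of_real 0 \<cdot>\<^sub>m M"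
    proof (rule eq_matI)
      fix i j assume "i < dim_row (complex_of_real 0 \<cdot>\<^sub>m M)" "j < dim_col (complex_of_real 0 \<cdot>\<^sub>m M)"
      then have ij: "i < n" "j < n" using Mc by auto
      have "\<phi>1$$(i,i) = 0" using zero1[OF ij(1)] True by simp
      then have "\<phi>1$$(i,j) = 0" using cone_zero[OF tol p1 ij] by blast
      then show "\<phi>1$$(i,j) = (complex_of_real 0 \<cdot>\<^sub>m M)$$(i,j)" using ij Mc by simp
    qed (use Mc p1c in auto)
    then show ?thesis unfolding ray_def by blast
  next
    case False
    define S where "S = {i. i < n \<and> M $$ (i, i) \<noteq> 0}"
    define E where "E = {(i, j). i \<in> S \<and> j \<in> S \<and> adj R i j}"
    define r where "r i = \<phi>1$$(i,i) / M$$(i,i)" for i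
    obtain u where u: "u<n" "M$$(u,u) \<noteq> 0" using exists_diag[OF tol M nz] by blast
    have uS: "u \<in> S" using u S_def by simp
    have edge: "\<phi>1$$(i,j) = r i * M$$(i,j) \<and> r j = r i" if ij: "i\<in>S" "j\<in>S" "adj R i j" for i j
    proof -
      have a: "i \<noteq> j" "(i,j) \<in> R" using ij(3) unfolding adj_def by auto
      have b: "i < n" "j < n" "M$$(i,i) \<noteq> 0" "M$$(j,j) \<noteq> 0" using ij(1,2) S_def by auto
      obtain C where C: "C \<in> maximal_cliques n R" "i \<in> C" "j \<in> C" using edge_clique[OF tol ij(3)] by blast
      have mn: "M$$(i,i) * M$$(j,j) = M$$(i,j) * M$$(j,i)"
        by (rule minor[OF Mc clique_sub[OF C(1)] rk[rule_format, OF C(1)] C(2,3)])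
      show ?thesis using edge_prop[OF tol M p1 p2 sum b(1,2) a(1,2) b(3,4) mn] unfolding r_def
        by simp
    qed
    have reach: "r v = r u" if "(u,v) \<in> E\<^sup>*" for v
      using that
    proof (induction rule: rtrancl_induct)
      case base then show ?case by simp
    next
      case (step y z)
      then have "y \<in> S" "z \<in> S" "adj R y z" unfolding E_def by auto
      then have "r z = r y" using edge by blast
      then show ?case using step.IH by simp
    qed
    have rS: "r v = r u" if "v \<in> S" for v
    proof -
      have "(u,v) \<in> E\<^sup>*" using conn uS that unfolding induced_connected_def S_def E_def by blast
      then show ?thesis by (rule reach)
    qed
    define t where "t = Re (\<phi>1$$(u,u)) / Re (M$$(u,u))"
    have du1: "Im (\<phi>1$$(u,u)) = 0 \<and> 0 \<le> Re (\<phi>1$$(u,u))" by (rule cone_diag[OF tol p1 u(1)])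
    have duM: "Im (M$$(u,u)) = 0 \<and> 0 \<le> Re (M$$(u,u))" by (rule cone_diag[OF tol M u(1)])
    have t0: "t \<ge> 0" unfolding t_def using du1 duM by simp
    have e1: "\<phi>1$$(u,u) = complex_of_real (Re (\<phi>1$$(u,u)))" using du1 by (simp add: complex_eq_iff)
    have eM: "M$$(u,u) = complex_of_real (Re (M$$(u,u)))" using duM by (simp add: complex_eq_iff)
    have rt: "r u = complex_of_real t" unfolding r_def t_def by (subst e1, subst eM) simp
    have "\<phi>1 = complex_of_real t \<cdot>\<^sub>m M"
    proof (rule eq_matI)
      fix i j assume "i < dim_row (complex_of_real t \<cdot>\<^sub>m M)" "j < dim_col (complex_of_real t \<cdot>\<^sub>m M)"
      then have ij: "i < n" "j < n" using Mc by auto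
      have rhs: "(complex_of_real t \<cdot>\<^sub>m M)$$(i,j) = complex_of_real t * M$$(i,j)" using ij Mc by simp
      show "\<phi>1$$(i,j) = (complex_of_real t \<cdot>\<^sub>m M)$$(i,j)"
      proof (cases "M$$(i,i) = 0")
        case True
        then have "\<phi>1$$(i,i) = 0" using zero1[OF ij(1)] by simp
        then show ?thesis using cone_zero[OF tol p1 ij] cone_zero[OF tol M ij True] rhs by simp
      next
        case Fi: False
        show ?thesis
        proof (cases "M$$(j,j) = 0")
          case True
          then have "\<phi>1$$(j,j) = 0" using zero1[OF ij(2)] by simp
          then show ?thesis using cone_zero[OF tol p1 ij(2,1)] cone_zero[OF tol M ij(2,1) True] rhs by simp
        next
          case Fj: False
          have iS: "i \<in> S" "j \<in> S" using Fi Fj ij S_def by auto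
          show ?thesis
          proof (cases "i = j")
            case True
            have "\<phi>1$$(i,i) = r i * M$$(i,i)" unfolding r_def using Fi by simp
            then show ?thesis using True rS[OF iS(1)] rt rhs by simp
          next
            case Fij: False
            show ?thesis
            proof (cases "(i,j) \<in> R")
              case True
              then have "adj R i j" using Fij adj_def by simp
              then show ?thesis using edge[OF iS] rS[OF iS(1)] rt rhs by simp
            next
              case False
              then show ?thesis using cone_offR[OF p1 ij False] cone_offR[OF M ij False] rhs by simp
            qed
          qed
        qed
      qed
    qed (use Mc p1c in auto)
    then show ?thesis unfolding ray_def using t0 by blast
  qed
qed



definition restr :: "nat \<Rightarrow> nat set \<Rightarrow> complex mat \<Rightarrow> complex mat" where
  "restr n T A = mat n n (\<lambda>(i,j). if i \<in> T \<and> j \<in> T then A$$(i,j) else 0)"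

lemma sf_restr: "sf n (restr n T A) f f = sf n A (\<lambda>k. if k \<in> T then f k else 0) (\<lambda>k. if k \<in> T then f k else 0)"
  unfolding sf_def restr_def by (intro sum.cong refl) auto

lemma psd_restr: "psd n A \<Longrightarrow> psd n (restr n T A)"
  unfolding psd_iff sf_restr by (simp add: restr_def)

lemma restr_cone:
  assumes M: "M \<in> dual_cone n R"
  shows "restr n T M \<in> dual_cone n R"
proof -
  obtain N where N: "M \<in> carrier_mat n n" "N \<in> carrier_mat n n" "\<forall>i<n. \<forall>j<n. (i,j)\<notin>R \<longrightarrow> M$$(i,j)=0"
    "\<forall>i<n. \<forall>j<n. (i,j)\<in>R \<longrightarrow> N$$(i,j)=0" "psd n (M+N)" by (rule cone_D[OF M])
  have e: "restr n T M + restr n T N = restr n T (M + N)"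
    by (rule eq_matI) (use N(1,2) in \<open>auto simp: restr_def\<close>)
  have "restr n T M \<in> E_space n R" unfolding E_space_def using N(3) by (auto simp: restr_def)
  moreover have "restr n T N \<in> carrier_mat n n" "\<forall>i<n. \<forall>j<n. (i,j)\<in>R \<longrightarrow> restr n T N $$(i,j)=0"
    "psd n (restr n T M + restr n T N)"
    using N(4) psd_restr[OF N(5)] unfolding e by (auto simp: restr_def)
  ultimately show ?thesis unfolding dual_cone_def by blast
qed

lemma one_ray: "M \<in> carrier_mat n n \<Longrightarrow> M \<in> ray M"
proof -
  assume Mc: "M \<in> carrier_mat n n"
  have "M = complex_of_real 1 \<cdot>\<^sub>m M" by (rule eq_matI) (use Mc in auto)
  then show ?thesis unfolding ray_def by force
qed

lemma conn_only:
  assumes tol: "tolerance_rel n R" and M: "M \<in> dual_cone n R" and ext: "extremal_ray (dual_cone n R) M"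
  shows "induced_connected R {i. i < n \<and> M $$ (i, i) \<noteq> 0}"
proof -
  define S where "S = {i. i < n \<and> M $$ (i, i) \<noteq> 0}"
  define E where "E = {(i, j). i \<in> S \<and> j \<in> S \<and> adj R i j}"
  have Mc: "M \<in> carrier_mat n n" by (rule cone_carrier[OF M])
  have "(u,v) \<in> E\<^sup>*" if uS: "u \<in> S" and vS: "v \<in> S" for u v
  proof (rule ccontr)
    assume nr: "(u,v) \<notin> E\<^sup>*"
    define T where "T = {k. (u,k) \<in> E\<^sup>*}"
    have mixed: "M$$(i,j) = 0 \<and> M$$(j,i) = 0" if ij: "i<n" "j<n" "i \<in> T" "j \<notin> T" for i j
    proof (cases "(i,j) \<in> R")
      case False
      then have "(j,i) \<notin> R" using tolD(2)[OF tol] by blast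
      then show ?thesis using cone_offR[OF M ij(1,2) False] cone_offR[OF M ij(2,1)] by simp
    next
      case True
      show ?thesis
      proof (cases "M$$(i,i) = 0 \<or> M$$(j,j) = 0")
        case True
        then show ?thesis using cone_zero[OF tol M ij(1,2)] cone_zero[OF tol M ij(2,1)] by blast
      next
        case False
        then have "i \<in> S" "j \<in> S" using ij S_def by auto
        moreover have "i \<noteq> j" using ij by auto
        ultimately have "(i,j) \<in> E" unfolding E_def adj_def using True by simp
        then have "(u,j) \<in> E\<^sup>*" using ij(3) unfolding T_def by (simp add: rtrancl_into_rtrancl)
        then show ?thesis using ij(4) T_def by simp
      qed
    qed
    define M1 where "M1 = restr n T M"
    define M2 where "M2 = restr n (-T) M"
    have sumM: "M1 + M2 = M"
    proof (rule eq_matI)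
      fix i j assume "i < dim_row M" "j < dim_col M"
      then have ij: "i < n" "j < n" using Mc by auto
      show "(M1 + M2)$$(i,j) = M$$(i,j)"
        using ij mixed[OF ij] mixed[OF ij(2,1)] unfolding M1_def M2_def restr_def by auto
    qed (use Mc in \<open>auto simp: M1_def M2_def restr_def\<close>)
    have c1: "M1 \<in> dual_cone n R" "M2 \<in> dual_cone n R" unfolding M1_def M2_def by (rule restr_cone[OF M])+
    have "M1 + M2 \<in> ray M" unfolding sumM by (rule one_ray[OF Mc])
    then have "M1 \<in> ray M" using ext c1 unfolding extremal_ray_def by blast
    then obtain c where c: "M1 = complex_of_real c \<cdot>\<^sub>m M" unfolding ray_def by blast
    have un: "u < n" "M$$(u,u) \<noteq> 0" using uS S_def by auto
    have vn: "v < n" "M$$(v,v) \<noteq> 0" using vS S_def by auto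
    have "v \<notin> T" using nr T_def by simp
    then have "M1$$(v,v) = 0" unfolding M1_def restr_def using vn by simp
    then have "complex_of_real c * M$$(v,v) = 0" using c vn Mc by simp
    then have c0: "c = 0" using vn by simp
    have "u \<in> T" unfolding T_def by simp
    then have "M1$$(u,u) = M$$(u,u)" unfolding M1_def restr_def using un by simp
    then have "M$$(u,u) = complex_of_real c * M$$(u,u)" using c un Mc by simp
    then show False using c0 un by simp
  qed
  then show ?thesis unfolding induced_connected_def S_def E_def by blast
qed



lemma sf_minus:
  assumes "A \<in> carrier_mat n n" "B \<in> carrier_mat n n"
  shows "sf n (A - B) f f = sf n A f f - sf n B f f"
  unfolding sf_def using assms by (simp add: sum_subtractf[symmetric] algebra_simps)

lemma sf_lin:
  "sf n A (\<lambda>k. f k + t * e k) (\<lambda>k. f k + t * e k) = sf n A f f + t * sf n A f e + cnj t * sf n A e f + cnj t * t * sf n A e e"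
proof -
  have h: "\<And>i j. cnj (f i + t * e i) * A$$(i,j) * (f j + t * e j) = cnj(f i)*A$$(i,j)*f j + t*(cnj(f i)*A$$(i,j)*e j)
     + cnj t*(cnj(e i)*A$$(i,j)*f j) + cnj t * t * (cnj(e i)*A$$(i,j)*e j)" by (simp add: algebra_simps)
  show ?thesis unfolding sf_def h by (simp add: sum.distrib sum_distrib_left)
qed

lemma sf_e_right:
  assumes "i0 < n"
  shows "sf n A f (\<lambda>k. if k = i0 then 1 else 0) = (\<Sum>j<n. cnj (f j) * A$$(j,i0))"
  unfolding sf_def using assms by (simp add: if_distrib cong: if_cong)

lemma sf_e_left:
  assumes "i0 < n"
  shows "sf n A (\<lambda>k. if k = i0 then 1 else 0) f = (\<Sum>k<n. A$$(i0,k) * f k)"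
proof -
  have h: "\<And>i. (\<Sum>j<n. cnj (if i = i0 then 1 else 0) * A$$(i,j) * f j) = (if i = i0 then (\<Sum>j<n. A$$(i0,j) * f j) else 0)"
    by simp
  show ?thesis unfolding sf_def h using assms by simp
qed

lemma sf_e_e:
  assumes "i0 < n"
  shows "sf n A (\<lambda>k. if k = i0 then 1 else 0) (\<lambda>k. if k = i0 then 1 else 0) = A$$(i0,i0)"
  using sf_one[OF assms] .

definition piR :: "nat \<Rightarrow> (nat \<times> nat) set \<Rightarrow> complex mat \<Rightarrow> complex mat" where
  "piR n R A = mat n n (\<lambda>(i,j). if (i,j) \<in> R then A$$(i,j) else 0)"

lemma pi_cone:
  assumes "psd n A"
  shows "piR n R A \<in> dual_cone n R"
proof -
  have Ac: "A \<in> carrier_mat n n" using assms psd_def by blast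
  have e: "piR n R A + (A - piR n R A) = A"
    by (rule eq_matI) (use Ac in \<open>auto simp: piR_def\<close>)
  have "piR n R A \<in> E_space n R" unfolding E_space_def by (auto simp: piR_def)
  moreover have "A - piR n R A \<in> carrier_mat n n" "\<forall>i<n. \<forall>j<n. (i,j)\<in>R \<longrightarrow> (A - piR n R A) $$(i,j)=0"
    "psd n (piR n R A + (A - piR n R A))"
    using Ac assms unfolding e by (auto simp: piR_def)
  ultimately show ?thesis unfolding dual_cone_def by blast
qed

lemma rank_only:
  assumes tol: "tolerance_rel n R" and M: "M \<in> dual_cone n R" and nz: "M \<noteq> 0\<^sub>m n n"
    and ext: "extremal_ray (dual_cone n R) M"
  shows "\<forall>C \<in> maximal_cliques n R. vec_space.rank (card C) (submatrix M C C) \<le> 1"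
proof
  fix C assume C: "C \<in> maximal_cliques n R"
  obtain N where N: "M \<in> carrier_mat n n" "N \<in> carrier_mat n n" "\<forall>i<n. \<forall>j<n. (i,j)\<notin>R \<longrightarrow> M$$(i,j)=0"
    "\<forall>i<n. \<forall>j<n. (i,j)\<in>R \<longrightarrow> N$$(i,j)=0" "psd n (M+N)" by (rule cone_D[OF M])
  define P where "P = M + N"
  have psdP: "psd n P" using N(5) P_def by simp
  have Pc: "P \<in> carrier_mat n n" using N(1,2) P_def by simp
  have Pe: "P$$(a,b) = M$$(a,b)" if "(a,b) \<in> R" for a b
    using that N tolD(3)[OF tol that] P_def by auto
  obtain i0 where i0: "i0 < n" "M$$(i0,i0) \<noteq> 0" using exists_diag[OF tol M nz] by blast
  define p where "p = P$$(i0,i0)"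
  have pM: "p = M$$(i0,i0)" unfolding p_def using Pe tolD(1)[OF tol i0(1)] by simp
  have p0: "p \<noteq> 0" using pM i0 by simp
  have pd: "Im p = 0 \<and> 0 \<le> Re p" unfolding p_def by (rule psd_diag[OF psdP i0(1)])
  define \<rho> where "\<rho> = Re p"
  have prho: "p = complex_of_real \<rho>" unfolding \<rho>_def using pd by (simp add: complex_eq_iff)
  have rho0: "\<rho> > 0" using pd p0 prho \<rho>_def by (metis less_eq_real_def of_real_0)
  have cp: "cnj p = p" using prho by simp
  define Q where "Q = mat n n (\<lambda>(j,k). P$$(j,i0) * P$$(i0,k) / p)"
  have Qc: "Q \<in> carrier_mat n n" unfolding Q_def by simp
  define w where "w f = (\<Sum>k<n. P$$(i0,k) * f k)" for f :: "nat \<Rightarrow> complex"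
  have cw: "(\<Sum>j<n. cnj (f j) * P$$(j,i0)) = cnj (w f)" for f
    unfolding w_def using psd_herm[OF psdP i0(1)] by (simp add: mult.commute)
  have sfQ: "sf n Q f f = cnj (w f) * w f / p" for f
  proof -
    have "sf n Q f f = (\<Sum>j<n. \<Sum>k<n. (cnj (f j) * P$$(j,i0)) * (P$$(i0,k) * f k) / p)"
      unfolding sf_def Q_def by (intro sum.cong refl) (simp add: algebra_simps)
    also have "\<dots> = (\<Sum>j<n. cnj (f j) * P$$(j,i0)) * (\<Sum>k<n. P$$(i0,k) * f k) / p"
      by (simp add: sum_product sum_divide_distrib)
    finally show ?thesis unfolding cw w_def .
  qed
  have sfQr: "sf n Q f f = complex_of_real ((cmod (w f))\<^sup>2 / \<rho>)" for f
  proof -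
    have "cnj (w f) * w f = complex_of_real ((cmod (w f))\<^sup>2)" by (metis complex_norm_square mult.commute)
    then show ?thesis unfolding sfQ prho by (simp only: of_real_divide)
  qed
  have psdQ: "psd n Q" unfolding psd_iff using Qc sfQr rho0 by simp
  have psdPQ: "psd n (P - Q)" unfolding psd_iff
  proof (intro conjI allI)
    show "P - Q \<in> carrier_mat n n" by (rule minus_carrier_mat[OF Qc])
    fix f
    define e where "e = (\<lambda>k::nat. if k = i0 then (1::complex) else 0)"
    define t where "t = - w f / p"
    have "sf n P (\<lambda>k. f k + t * e k) (\<lambda>k. f k + t * e k) = sf n P f f + t * cnj (w f) + cnj t * w f + cnj t * t * p"
    proof -
      have a1: "sf n P f e = cnj (w f)" unfolding e_def sf_e_right[OF i0(1)] cw ..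
      have a2: "sf n P e f = w f" unfolding e_def sf_e_left[OF i0(1)] w_def ..
      have a3: "sf n P e e = p" unfolding e_def sf_e_e[OF i0(1)] p_def ..
      show ?thesis unfolding sf_lin a1 a2 a3 ..
    qed
    also have "\<dots> = sf n P f f - cnj (w f) * w f / p"
      unfolding t_def using p0 cp by (simp add: field_simps)
    also have "\<dots> = sf n (P - Q) f f" unfolding sf_minus[OF Pc Qc] sfQ ..
    finally have eq: "sf n (P - Q) f f = sf n P (\<lambda>k. f k + t * e k) (\<lambda>k. f k + t * e k)" by simp
    show "sf n (P - Q) f f \<in> \<real>" "0 \<le> Re (sf n (P - Q) f f)" unfolding eq using psdP psd_iff by blast+
  qed
  have c1: "piR n R Q \<in> dual_cone n R" by (rule pi_cone[OF psdQ])
  have c2: "piR n R (P - Q) \<in> dual_cone n R" by (rule pi_cone[OF psdPQ])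
  have sumM: "piR n R Q + piR n R (P - Q) = M"
  proof (rule eq_matI)
    fix i j assume "i < dim_row M" "j < dim_col M"
    then have ij: "i < n" "j < n" using N(1) by auto
    show "(piR n R Q + piR n R (P - Q))$$(i,j) = M$$(i,j)"
    proof (cases "(i,j) \<in> R")
      case True then show ?thesis using ij Pc Qc Pe[OF True] by (simp add: piR_def)
    next
      case False then show ?thesis using ij N(3) by (simp add: piR_def)
    qed
  qed (use N(1) in \<open>auto simp: piR_def\<close>)
  have "piR n R Q + piR n R (P - Q) \<in> ray M" unfolding sumM by (rule one_ray[OF N(1)])
  then have "piR n R Q \<in> ray M" using ext c1 c2 unfolding extremal_ray_def by blast
  then obtain c where c: "piR n R Q = complex_of_real c \<cdot>\<^sub>m M" unfolding ray_def by blast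
  have ent: "Q$$(j,k) = complex_of_real c * M$$(j,k)" if "(j,k) \<in> R" for j k
  proof -
    have jk: "j < n" "k < n" using tolD(3)[OF tol that] by auto
    have "piR n R Q $$ (j,k) = (complex_of_real c \<cdot>\<^sub>m M) $$ (j,k)" using c by simp
    then show ?thesis using jk that N(1) by (simp add: piR_def)
  qed
  have "Q$$(i0,i0) = p" unfolding Q_def p_def using i0 p0[unfolded p_def] by simp
  then have "complex_of_real c * M$$(i0,i0) = p" using ent[OF tolD(1)[OF tol i0(1)]] by simp
  then have cnz: "complex_of_real c \<noteq> 0" using p0 by auto
  have Csub: "C \<subseteq> {0..<n}" by (rule clique_sub[OF C])
  have CC: "{k. k < dim_row M \<and> k \<in> C} = C" "{k. k < dim_col M \<and> k \<in> C} = C" using Csub N(1) by fastforce+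
  have A: "submatrix M C C \<in> carrier_mat (card C) (card C)"
    by (rule carrier_matI) (simp_all only: dim_submatrix CC)
  have Cin: "(pick C x, pick C y) \<in> R" if "x < card C" "y < card C" for x y
  proof -
    have xy: "pick C x \<in> C" "pick C y \<in> C" using pick_in_set that by blast+
    show ?thesis
    proof (cases "pick C x = pick C y")
      case True
      have "pick C x < n" using xy Csub by auto
      then show ?thesis using True tolD(1)[OF tol] by simp
    next
      case False
      then show ?thesis using xy C unfolding maximal_cliques_def is_clique_def adj_def by blast
    qed
  qed
  show "vec_space.rank (card C) (submatrix M C C) \<le> 1"
  proof (rule vec_space.rank_le_1_product_entries[OF A])
    fix r s assume rs: "r < dim_row (submatrix M C C)" "s < dim_col (submatrix M C C)"
    then have rs': "r < card C" "s < card C" using A by auto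
    have "r < card {k. k < dim_row M \<and> k \<in> C}" "s < card {k. k < dim_col M \<and> k \<in> C}"
      using rs' unfolding CC by auto
    then have "submatrix M C C $$ (r,s) = M$$(pick C r, pick C s)"
      unfolding submatrix_def by (subst index_mat(1)) auto
    also have "\<dots> = Q$$(pick C r, pick C s) / complex_of_real c"
      using ent[OF Cin[OF rs']] cnz by simp
    also have "\<dots> = (P$$(pick C r, i0) / (complex_of_real c * p)) * P$$(i0, pick C s)"
      unfolding Q_def using Cin[OF rs'] tolD(3)[OF tol] by simp
    finally show "submatrix M C C $$ (r,s) = (\<lambda>r. P$$(pick C r, i0) / (complex_of_real c * p)) r * (\<lambda>s. P$$(i0, pick C s)) s"
      by simp
  qed
qed


theorem mainTheorem3:
  fixes n :: nat and R :: "(nat \<times> nat) set" and M :: "complex mat"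
  assumes "tolerance_rel n R"
    and "chordal n R"
    and "M \<in> dual_cone n R"
    and "M \<noteq> 0\<^sub>m n n"
  shows "extremal_ray (dual_cone n R) M \<longleftrightarrow>
    ((\<forall>C \<in> maximal_cliques n R. vec_space.rank (card C) (submatrix M C C) \<le> 1)
     \<and> induced_connected R {i. i < n \<and> M $$ (i, i) \<noteq> 0})"
proof
  assume ext: "extremal_ray (dual_cone n R) M"
  show "(\<forall>C \<in> maximal_cliques n R. vec_space.rank (card C) (submatrix M C C) \<le> 1)
     \<and> induced_connected R {i. i < n \<and> M $$ (i, i) \<noteq> 0}"
    using rank_only[OF assms(1,3,4) ext] conn_only[OF assms(1,3) ext] by blast
next
  assume h: "(\<forall>C \<in> maximal_cliques n R. vec_space.rank (card C) (submatrix M C C) \<le> 1)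
     \<and> induced_connected R {i. i < n \<and> M $$ (i, i) \<noteq> 0}"
  have Mc: "M \<in> carrier_mat n n" by (rule cone_carrier[OF assms(3)])
  show "extremal_ray (dual_cone n R) M" unfolding extremal_ray_def
  proof (intro conjI ballI impI)
    show "M \<in> dual_cone n R" by (rule assms(3))
    show "M \<noteq> 0\<^sub>m (dim_row M) (dim_col M)" using assms(4) Mc by auto
    fix \<phi>1 \<phi>2 assume p1: "\<phi>1 \<in> dual_cone n R" and p2: "\<phi>2 \<in> dual_cone n R" and s: "\<phi>1 + \<phi>2 \<in> ray M"
    show "\<phi>1 \<in> ray M" using ray_if[OF assms(1,3,4) conjunct1[OF h] conjunct2[OF h] p1 p2 s] .
    have "\<phi>2 + \<phi>1 = \<phi>1 + \<phi>2" by (rule comm_add_mat[OF cone_carrier[OF p2] cone_carrier[OF p1]])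
    then have s2: "\<phi>2 + \<phi>1 \<in> ray M" using s by simp
    show "\<phi>2 \<in> ray M" using ray_if[OF assms(1,3,4) conjunct1[OF h] conjunct2[OF h] p2 p1 s2] .
  qed
qed

end
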